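(* Let $s,t_1,\dots,t_n\in\mathbb{R}^2$ be distinct points, with $T=\{t_1,\dots,t_n\}$ ordered so that $D_{st_1}\le\dots\le D_{st_n}$, and let $P_s=P_r>0$, $N_0>0$, $\alpha\ge 2$. Let $m$ be the midpoint of the segment $[s,t_n]$, and let $C_s$, $C_m$ be the closed disks of radius $D_{st_n}/2$ centered at $s$ and at $m$ respectively. If $T\subseteq C_s\cup C_m$ (and $m\notin T$), then placing the relay at $m$ maximizes the multicast rate $R^*_{sT}(r)$ over all relay positions $r\in\mathbb{R}^2\setminus(\{s\}\cup T)$.
   Context: $D_{uv}$ is Euclidean distance. Achievable low-SNR broadcast-relay hypergraph model: for a relay position $r\notin\{s\}\cup T$, the node set is $\mathcal{N}=\{s,r\}\cup T$. The hyperarcs are $(s,J)$ for nonempty $J\subseteq\{r\}\cup T$ and $(r,J)$ for nonempty $J\subseteq T$. A power allocation assigns $P_{sJ}\ge0$, $P_{rJ}\ge0$ with $\sum_J P_{sJ}\le P_s$ and $\sum_J P_{rJ}\le P_r$; the capacity of hyperarc $(i,J)$ is $c_{iJ}=P_{iJ}/(N_0\max_{j\in J}D_{ij}^{\alpha})$. For a receiver $t\in T$, $R_{st}$ is the minimum, over all $S\subseteq\mathcal{N}$ with $s\in S$, $t\notin S$, of $\sum c_{iJ}$ over hyperarcs with $i\in S$ and $J\not\subseteq S$. The multicast rate is $R_{sT}=\min_{t\in T}R_{st}$, and $R^*_{sT}(r)$ is its maximum over all power allocations. *)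

theory Defs
  imports "HOL-Analysis.Analysis"
begin

type_synonym point = "real ^ 2"

definition src_arcs :: "point \<Rightarrow> point \<Rightarrow> point set \<Rightarrow> point set set" where
  "src_arcs s r T = {J. J \<noteq> {} \<and> J \<subseteq> insert r T}"

definition relay_arcs :: "point set \<Rightarrow> point set set" where
  "relay_arcs T = {J. J \<noteq> {} \<and> J \<subseteq> T}"

definition hyperarcs :: "point \<Rightarrow> point \<Rightarrow> point set \<Rightarrow> (point \<times> point set) set" where
  "hyperarcs s r T = (\<lambda>J. (s, J)) ` src_arcs s r T \<union> (\<lambda>J. (r, J)) ` relay_arcs T"

text \<open>Power allocation: P i J is the power of node i on hyperarc (i,J).\<close>
definition valid_alloc ::
  "real \<Rightarrow> real \<Rightarrow> point \<Rightarrow> point \<Rightarrow> point set \<Rightarrow> (point \<Rightarrow> point set \<Rightarrow> real) \<Rightarrow> bool" where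
  "valid_alloc Ps Pr s r T P \<longleftrightarrow>
     (\<forall>(i, J) \<in> hyperarcs s r T. 0 \<le> P i J) \<and>
     (\<Sum>J \<in> src_arcs s r T. P s J) \<le> Ps \<and>
     (\<Sum>J \<in> relay_arcs T. P r J) \<le> Pr"

definition capacity :: "real \<Rightarrow> real \<Rightarrow> (point \<Rightarrow> point set \<Rightarrow> real) \<Rightarrow> point \<Rightarrow> point set \<Rightarrow> real" where
  "capacity N0 \<alpha> P i J = P i J / (N0 * (MAX j \<in> J. dist i j powr \<alpha>))"

definition cut_value ::
  "real \<Rightarrow> real \<Rightarrow> point \<Rightarrow> point \<Rightarrow> point set \<Rightarrow> (point \<Rightarrow> point set \<Rightarrow> real) \<Rightarrow> point set \<Rightarrow> real" where
  "cut_value N0 \<alpha> s r T P S =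
     (\<Sum>(i, J) \<in> {(i, J) \<in> hyperarcs s r T. i \<in> S \<and> \<not> J \<subseteq> S}. capacity N0 \<alpha> P i J)"

definition rate_st ::
  "real \<Rightarrow> real \<Rightarrow> point \<Rightarrow> point \<Rightarrow> point set \<Rightarrow> (point \<Rightarrow> point set \<Rightarrow> real) \<Rightarrow> point \<Rightarrow> real" where
  "rate_st N0 \<alpha> s r T P t =
     (MIN S \<in> {S. S \<subseteq> insert s (insert r T) \<and> s \<in> S \<and> t \<notin> S}. cut_value N0 \<alpha> s r T P S)"

definition multicast_rate ::
  "real \<Rightarrow> real \<Rightarrow> point \<Rightarrow> point \<Rightarrow> point set \<Rightarrow> (point \<Rightarrow> point set \<Rightarrow> real) \<Rightarrow> real" where
  "multicast_rate N0 \<alpha> s r T P = (MIN t \<in> T. rate_st N0 \<alpha> s r T P t)"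

definition opt_rate :: "real \<Rightarrow> real \<Rightarrow> real \<Rightarrow> real \<Rightarrow> point \<Rightarrow> point set \<Rightarrow> point \<Rightarrow> real" where
  "opt_rate Ps Pr N0 \<alpha> s T r =
     (SUP P \<in> {P. valid_alloc Ps Pr s r T P}. multicast_rate N0 \<alpha> s r T P)"

end

theory Submission imports Defs begin

lemma powr_gap:
  fixes p q \<alpha> :: real
  assumes "0 < q" "q < p" "1 \<le> \<alpha>"
  shows "p powr \<alpha> - q powr \<alpha> \<le> (2*p) powr \<alpha> - (p+q) powr \<alpha>"
proof -
  have der: "\<And>x. 0 < x \<Longrightarrow> DERIV (\<lambda>z. z powr \<alpha>) x :> \<alpha> * x powr (\<alpha> - 1)"
    by (rule has_real_derivative_powr)
  obtain z1 where z1: "q < z1" "z1 < p" "p powr \<alpha> - q powr \<alpha> = (p - q) * (\<alpha> * z1 powr (\<alpha> - 1))"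
    using MVT2[of q p "\<lambda>z. z powr \<alpha>" "\<lambda>x. \<alpha> * x powr (\<alpha> - 1)"] der assms by force
  obtain z2 where z2: "p+q < z2" "z2 < 2*p" "(2*p) powr \<alpha> - (p+q) powr \<alpha> = (2*p - (p+q)) * (\<alpha> * z2 powr (\<alpha> - 1))"
    using MVT2[of "p+q" "2*p" "\<lambda>z. z powr \<alpha>" "\<lambda>x. \<alpha> * x powr (\<alpha> - 1)"] der assms by force
  have "z1 powr (\<alpha> - 1) \<le> z2 powr (\<alpha> - 1)"
    using z1 z2 assms by (intro powr_mono2) auto
  then have "(p - q) * (\<alpha> * z1 powr (\<alpha> - 1)) \<le> (p - q) * (\<alpha> * z2 powr (\<alpha> - 1))"
    using assms by (intro mult_left_mono) auto
  then show ?thesis using z1 z2 by simp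
qed

lemma keyK:
  fixes a d \<alpha> :: real
  assumes "0 < a" "a < d/2" "1 \<le> \<alpha>"
  shows "d powr \<alpha> - a powr \<alpha> \<le> (2 powr \<alpha> - 1) * (d - a) powr \<alpha>"
proof -
  have "(d-a) powr \<alpha> - a powr \<alpha> \<le> (2*(d-a)) powr \<alpha> - ((d-a)+a) powr \<alpha>"
    using assms by (intro powr_gap) auto
  moreover have "(2*(d-a)) powr \<alpha> = 2 powr \<alpha> * (d-a) powr \<alpha>"
    using assms powr_mult[of 2 "d-a" \<alpha>] by simp
  ultimately show ?thesis by (simp add: algebra_simps)
qed

lemma final_ineq:
  fixes a b d \<alpha> xs ys P :: real
  assumes "0 < a" "0 < b" "d \<le> a + b" "0 < d" "1 \<le> \<alpha>"
    and "0 \<le> xs" "0 \<le> ys" "xs + ys \<le> P"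
  shows "min (xs / d powr \<alpha> + ys / a powr \<alpha>) (xs / d powr \<alpha> + P / b powr \<alpha>) \<le> P / (d/2) powr \<alpha>"
proof (cases "d/2 \<le> a")
  case True
  have H: "0 < (d/2) powr \<alpha>" using assms by simp
  have "xs / d powr \<alpha> \<le> xs / (d/2) powr \<alpha>"
    using assms H by (intro divide_left_mono powr_mono2) auto
  moreover have "ys / a powr \<alpha> \<le> ys / (d/2) powr \<alpha>"
    using assms H True by (intro divide_left_mono powr_mono2) auto
  ultimately have "xs / d powr \<alpha> + ys / a powr \<alpha> \<le> (xs + ys) / (d/2) powr \<alpha>"
    by (simp add: add_divide_distrib)
  also have "\<dots> \<le> P / (d/2) powr \<alpha>" using assms H by (intro divide_right_mono) auto
  finally show ?thesis by linarith
next
  case False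
  define D where "D = d powr \<alpha>"
  define Aa where "Aa = a powr \<alpha>"
  define Bb where "Bb = b powr \<alpha>"
  define L where "L = Aa / D"
  have Dp: "D > 0" "Aa > 0" "Bb > 0" using assms by (auto simp: D_def Aa_def Bb_def)
  have AaD: "Aa \<le> D" unfolding Aa_def D_def using assms False by (intro powr_mono2) auto
  have L01: "0 \<le> L" "L \<le> 1" using Dp AaD by (auto simp: L_def)
  have H: "(d/2) powr \<alpha> = D / 2 powr \<alpha>"
    unfolding D_def using assms by (simp add: powr_divide)
  have K: "D - Aa \<le> (2 powr \<alpha> - 1) * Bb"
  proof -
    have "D - Aa \<le> (2 powr \<alpha> - 1) * (d - a) powr \<alpha>"
      unfolding D_def Aa_def using keyK[of a d \<alpha>] assms False by auto
    also have "\<dots> \<le> (2 powr \<alpha> - 1) * Bb"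
    proof (rule mult_left_mono)
      show "(d - a) powr \<alpha> \<le> Bb" unfolding Bb_def using assms False by (intro powr_mono2) auto
      have "1 \<le> 2 powr \<alpha>" using assms by (intro ge_one_powr_ge_zero) auto
      then show "0 \<le> 2 powr \<alpha> - 1" by simp
    qed
    finally show ?thesis .
  qed
  have "min (xs / D + ys / Aa) (xs / D + P / Bb) \<le> L * (xs / D + ys / Aa) + (1 - L) * (xs / D + P / Bb)"
  proof -
    have "L * min (xs / D + ys / Aa) (xs / D + P / Bb) \<le> L * (xs / D + ys / Aa)"
      using L01 by (intro mult_left_mono) auto
    moreover have "(1-L) * min (xs / D + ys / Aa) (xs / D + P / Bb) \<le> (1-L) * (xs / D + P / Bb)"
      using L01 by (intro mult_left_mono) auto
    ultimately show ?thesis by (simp add: algebra_simps)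
  qed
  also have "\<dots> = (xs + ys) / D + (1 - L) * (P / Bb)"
    using Dp by (simp add: L_def field_simps)
  also have "\<dots> \<le> P / D + (1 - L) * (P / Bb)"
    using Dp assms by (simp add: divide_right_mono)
  also have "\<dots> \<le> P / (D / 2 powr \<alpha>)"
  proof -
    have P0: "0 \<le> P" using assms by linarith
    have "P / D + (1 - L) * (P / Bb) = P * (1 + (D - Aa) / Bb) / D"
      using Dp by (simp add: L_def field_simps)
    also have "\<dots> \<le> P * (2 powr \<alpha>) / D"
    proof -
      have "(D - Aa) / Bb \<le> 2 powr \<alpha> - 1" using K Dp by (simp add: divide_le_eq)
      then have "P * (1 + (D - Aa) / Bb) \<le> P * 2 powr \<alpha>" using P0 by (intro mult_left_mono) auto
      then show ?thesis using Dp by (intro divide_right_mono) auto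
    qed
    also have "\<dots> = P / (D / 2 powr \<alpha>)" by simp
    finally show ?thesis .
  qed
  finally show ?thesis unfolding H D_def Aa_def Bb_def .
qed


lemma finite_src_arcs: "finite T \<Longrightarrow> finite (src_arcs s r T)"
  unfolding src_arcs_def by (rule finite_subset[of _ "Pow (insert r T)"]) auto

lemma finite_relay_arcs: "finite T \<Longrightarrow> finite (relay_arcs T)"
  unfolding relay_arcs_def by (rule finite_subset[of _ "Pow T"]) auto

lemma cut_value_eq:
  assumes "s \<noteq> r" "finite T"
  shows "cut_value N0 \<alpha> s r T P S =
    (\<Sum>J\<in>{J\<in>src_arcs s r T. s \<in> S \<and> \<not> J \<subseteq> S}. capacity N0 \<alpha> P s J) +
    (\<Sum>J\<in>{J\<in>relay_arcs T. r \<in> S \<and> \<not> J \<subseteq> S}. capacity N0 \<alpha> P r J)"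
proof -
  let ?A = "{J\<in>src_arcs s r T. s \<in> S \<and> \<not> J \<subseteq> S}"
  let ?B = "{J\<in>relay_arcs T. r \<in> S \<and> \<not> J \<subseteq> S}"
  have eq: "{(i, J) \<in> hyperarcs s r T. i \<in> S \<and> \<not> J \<subseteq> S} = Pair s ` ?A \<union> Pair r ` ?B"
    unfolding hyperarcs_def by auto
  have fA: "finite ?A" using finite_src_arcs[OF assms(2)] by auto
  have fB: "finite ?B" using finite_relay_arcs[OF assms(2)] by auto
  have "cut_value N0 \<alpha> s r T P S = (\<Sum>(i, J) \<in> Pair s ` ?A \<union> Pair r ` ?B. capacity N0 \<alpha> P i J)"
    unfolding cut_value_def eq ..
  also have "\<dots> = (\<Sum>(i, J) \<in> Pair s ` ?A. capacity N0 \<alpha> P i J) + (\<Sum>(i, J) \<in> Pair r ` ?B. capacity N0 \<alpha> P i J)"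
    using fA fB assms(1) by (intro sum.union_disjoint) auto
  also have "\<dots> = (\<Sum>J\<in>?A. capacity N0 \<alpha> P s J) + (\<Sum>J\<in>?B. capacity N0 \<alpha> P r J)"
    by (simp add: sum.reindex inj_on_def)
  finally show ?thesis .
qed

lemma capacity_nonneg:
  assumes "0 \<le> P i J" "0 \<le> N0" "finite J" "J \<noteq> {}"
  shows "0 \<le> capacity N0 \<alpha> P i J"
proof -
  obtain j where j: "j \<in> J" using assms by auto
  have "0 \<le> dist i j powr \<alpha>" by simp
  also have "\<dots> \<le> (MAX j \<in> J. dist i j powr \<alpha>)" using j assms by (intro Max_ge) auto
  finally show ?thesis unfolding capacity_def using assms by simp
qed

lemma capacity_le:
  assumes "0 \<le> P i J" "0 < N0" "finite J" "j \<in> J" "0 < dist i j powr \<alpha>"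
  shows "capacity N0 \<alpha> P i J \<le> P i J / (N0 * dist i j powr \<alpha>)"
proof -
  have h: "dist i j powr \<alpha> \<le> (MAX j \<in> J. dist i j powr \<alpha>)" using assms by (intro Max_ge) auto
  have h2: "N0 * dist i j powr \<alpha> \<le> N0 * (MAX j \<in> J. dist i j powr \<alpha>)"
    using h assms(2) by (intro mult_left_mono) auto
  have h3: "0 < N0 * dist i j powr \<alpha>" using assms(2,5) by (intro mult_pos_pos)
  show ?thesis unfolding capacity_def
    by (rule divide_left_mono[OF h2 assms(1)]) (rule mult_pos_pos[OF _ h3], use h3 h2 in linarith)
qed

lemma capacity_ge:
  assumes "0 \<le> P i J" "0 < N0" "finite J" "j \<in> J" "0 < dist i j powr \<alpha>"
    and "\<And>k. k \<in> J \<Longrightarrow> dist i k powr \<alpha> \<le> M"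
  shows "P i J / (N0 * M) \<le> capacity N0 \<alpha> P i J"
proof -
  have "dist i j powr \<alpha> \<le> (MAX j \<in> J. dist i j powr \<alpha>)" using assms by (intro Max_ge) auto
  moreover have "(MAX j \<in> J. dist i j powr \<alpha>) \<le> M" using assms by (subst Max_le_iff) auto
  ultimately have "0 < (MAX j \<in> J. dist i j powr \<alpha>)" "(MAX j \<in> J. dist i j powr \<alpha>) \<le> M" "0 < M"
    using assms by linarith+
  then show ?thesis unfolding capacity_def using assms
    by (intro divide_left_mono mult_left_mono mult_pos_pos) auto
qed


lemma upper:
  fixes s tn r :: point
  assumes fT: "finite T" and tnT: "tn \<in> T" and sT: "s \<notin> T" and rr: "r \<notin> insert s T"
    and N0: "0 < N0" and al: "1 \<le> \<alpha>" and V: "valid_alloc Ps Pr s r T P" and PP: "Ps = Pr"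
  shows "multicast_rate N0 \<alpha> s r T P \<le> Ps / (N0 * (dist s tn / 2) powr \<alpha>)"
proof -
  define A where "A = src_arcs s r T"
  define B where "B = relay_arcs T"
  define X where "X = {J\<in>A. tn \<in> J}"
  define Y where "Y = {J\<in>A. tn \<notin> J \<and> r \<in> J}"
  define Z where "Z = {J\<in>B. tn \<in> J}"
  define xs where "xs = (\<Sum>J\<in>X. P s J)"
  define ys where "ys = (\<Sum>J\<in>Y. P s J)"
  define d where "d = dist s tn"
  define a where "a = dist s r"
  define b where "b = dist r tn"
  have sr: "s \<noteq> r" and rT: "r \<notin> T" and stn: "s \<noteq> tn" and rtn: "r \<noteq> tn" using rr sT tnT by auto
  have dpos: "0 < d" "0 < a" "0 < b" using stn sr rtn by (auto simp: d_def a_def b_def)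
  have tri: "d \<le> a + b" unfolding d_def a_def b_def by (rule dist_triangle)
  have fA: "finite A" unfolding A_def using fT by (rule finite_src_arcs)
  have fB: "finite B" unfolding B_def using fT by (rule finite_relay_arcs)
  have Pn_s: "\<And>J. J \<in> A \<Longrightarrow> 0 \<le> P s J" and Pn_r: "\<And>J. J \<in> B \<Longrightarrow> 0 \<le> P r J"
    using V unfolding valid_alloc_def hyperarcs_def A_def B_def by auto
  have sumA: "(\<Sum>J\<in>A. P s J) \<le> Ps" and sumB: "(\<Sum>J\<in>B. P r J) \<le> Pr"
    using V unfolding valid_alloc_def A_def B_def by auto
  have finJA: "\<And>J. J \<in> A \<Longrightarrow> finite J" unfolding A_def src_arcs_def using fT
    by (auto intro: finite_subset)
  have finJB: "\<And>J. J \<in> B \<Longrightarrow> finite J" unfolding B_def relay_arcs_def using fT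
    by (auto intro: finite_subset)
  have fX: "finite X" "finite Y" "finite Z" using fA fB by (auto simp: X_def Y_def Z_def)
  have xs0: "0 \<le> xs" "0 \<le> ys" unfolding xs_def ys_def using Pn_s
    by (auto intro!: sum_nonneg simp: X_def Y_def)
  have xy: "xs + ys \<le> Ps"
  proof -
    have "xs + ys = (\<Sum>J\<in>X \<union> Y. P s J)" unfolding xs_def ys_def
      using fX by (subst sum.union_disjoint) (auto simp: X_def Y_def)
    also have "\<dots> \<le> (\<Sum>J\<in>A. P s J)" using fA Pn_s by (intro sum_mono2) (auto simp: X_def Y_def)
    finally show ?thesis using sumA by linarith
  qed
  have zsum: "(\<Sum>J\<in>Z. P r J) \<le> Pr"
  proof -
    have "(\<Sum>J\<in>Z. P r J) \<le> (\<Sum>J\<in>B. P r J)" using fB Pn_r by (intro sum_mono2) (auto simp: Z_def)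
    then show ?thesis using sumB by linarith
  qed
  have capX: "(\<Sum>J\<in>X. capacity N0 \<alpha> P s J) \<le> (xs / d powr \<alpha>) / N0"
  proof -
    have "(\<Sum>J\<in>X. capacity N0 \<alpha> P s J) \<le> (\<Sum>J\<in>X. P s J / (N0 * d powr \<alpha>))"
      using Pn_s finJA N0 dpos unfolding d_def
      by (intro sum_mono capacity_le[where j=tn]) (auto simp: X_def)
    also have "\<dots> = (xs / d powr \<alpha>) / N0" unfolding xs_def
      by (simp add: sum_divide_distrib[symmetric] field_simps)
    finally show ?thesis .
  qed
  have capY: "(\<Sum>J\<in>Y. capacity N0 \<alpha> P s J) \<le> (ys / a powr \<alpha>) / N0"
  proof -
    have "(\<Sum>J\<in>Y. capacity N0 \<alpha> P s J) \<le> (\<Sum>J\<in>Y. P s J / (N0 * a powr \<alpha>))"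
      using Pn_s finJA N0 dpos unfolding a_def
      by (intro sum_mono capacity_le[where j=r]) (auto simp: Y_def)
    also have "\<dots> = (ys / a powr \<alpha>) / N0" unfolding ys_def
      by (simp add: sum_divide_distrib[symmetric] field_simps)
    finally show ?thesis .
  qed
  have capZ: "(\<Sum>J\<in>Z. capacity N0 \<alpha> P r J) \<le> (Ps / b powr \<alpha>) / N0"
  proof -
    have "(\<Sum>J\<in>Z. capacity N0 \<alpha> P r J) \<le> (\<Sum>J\<in>Z. P r J / (N0 * b powr \<alpha>))"
      using Pn_r finJB N0 dpos unfolding b_def
      by (intro sum_mono capacity_le[where j=tn]) (auto simp: Z_def)
    also have "\<dots> = ((\<Sum>J\<in>Z. P r J) / b powr \<alpha>) / N0"
      by (simp add: sum_divide_distrib[symmetric] field_simps)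
    also have "\<dots> \<le> (Ps / b powr \<alpha>) / N0" using zsum PP N0 dpos
      by (intro divide_right_mono) auto
    finally show ?thesis .
  qed
  define S1 where "S1 = insert s (T - {tn})"
  define S2 where "S2 = insert s (insert r (T - {tn}))"
  define SS where "SS = {S. S \<subseteq> insert s (insert r T) \<and> s \<in> S \<and> tn \<notin> S}"
  have fSS: "finite SS" unfolding SS_def
    by (rule finite_subset[of _ "Pow (insert s (insert r T))"]) (use fT in auto)
  have S1in: "S1 \<in> SS" and S2in: "S2 \<in> SS" using stn rtn by (auto simp: SS_def S1_def S2_def)
  have cut1: "cut_value N0 \<alpha> s r T P S1 \<le> (xs / d powr \<alpha> + ys / a powr \<alpha>) / N0"
  proof -
    have e1: "{J\<in>src_arcs s r T. s \<in> S1 \<and> \<not> J \<subseteq> S1} = X \<union> Y"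
      unfolding X_def Y_def A_def S1_def src_arcs_def using rr stn rtn by auto
    have e2: "{J\<in>relay_arcs T. r \<in> S1 \<and> \<not> J \<subseteq> S1} = {}"
      unfolding S1_def using rr by auto
    have "cut_value N0 \<alpha> s r T P S1 = (\<Sum>J\<in>X \<union> Y. capacity N0 \<alpha> P s J)"
      unfolding cut_value_eq[OF sr fT] e1 e2 by simp
    also have "\<dots> = (\<Sum>J\<in>X. capacity N0 \<alpha> P s J) + (\<Sum>J\<in>Y. capacity N0 \<alpha> P s J)"
      using fX by (subst sum.union_disjoint) (auto simp: X_def Y_def)
    finally show ?thesis using capX capY by (simp add: add_divide_distrib)
  qed
  have cut2: "cut_value N0 \<alpha> s r T P S2 \<le> (xs / d powr \<alpha> + Ps / b powr \<alpha>) / N0"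
  proof -
    have e1: "{J\<in>src_arcs s r T. s \<in> S2 \<and> \<not> J \<subseteq> S2} = X"
      unfolding X_def A_def S2_def src_arcs_def using rr stn rtn by auto
    have e2: "{J\<in>relay_arcs T. r \<in> S2 \<and> \<not> J \<subseteq> S2} = Z"
      unfolding S2_def Z_def B_def relay_arcs_def using rr stn rtn by auto
    have "cut_value N0 \<alpha> s r T P S2 = (\<Sum>J\<in>X. capacity N0 \<alpha> P s J) + (\<Sum>J\<in>Z. capacity N0 \<alpha> P r J)"
      unfolding cut_value_eq[OF sr fT] e1 e2 by simp
    then show ?thesis using capX capZ by (simp add: add_divide_distrib)
  qed
  have "multicast_rate N0 \<alpha> s r T P \<le> rate_st N0 \<alpha> s r T P tn"
    unfolding multicast_rate_def using fT tnT by (intro Min_le) auto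
  also have "rate_st N0 \<alpha> s r T P tn \<le> min (cut_value N0 \<alpha> s r T P S1) (cut_value N0 \<alpha> s r T P S2)"
    unfolding rate_st_def SS_def[symmetric] using fSS S1in S2in by (auto intro!: Min_le)
  also have "\<dots> \<le> min (xs / d powr \<alpha> + ys / a powr \<alpha>) (xs / d powr \<alpha> + Ps / b powr \<alpha>) / N0"
    using cut1 cut2 by (auto simp: min_def)
  also have "\<dots> \<le> (Ps / (d/2) powr \<alpha>) / N0"
    using final_ineq[OF dpos(2,3) tri dpos(1) al xs0 xy] N0 by (intro divide_right_mono) auto
  also have "\<dots> = Ps / (N0 * (dist s tn / 2) powr \<alpha>)" by (simp add: d_def field_simps)
  finally show ?thesis .
qed


theorem lemma3:
  fixes s tn :: point and T :: "point set" and Ps Pr N0 \<alpha> :: real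
  assumes "finite T" and "tn \<in> T" and "s \<notin> T"
    and "\<forall>t \<in> T. dist s t \<le> dist s tn"
    and "Ps = Pr" and "Ps > 0" and "N0 > 0" and "\<alpha> \<ge> 2"
    and "T \<subseteq> cball s (dist s tn / 2) \<union> cball (midpoint s tn) (dist s tn / 2)"
    and "midpoint s tn \<notin> T"
  shows "\<forall>r. r \<notin> insert s T \<longrightarrow>
           opt_rate Ps Pr N0 \<alpha> s T r \<le> opt_rate Ps Pr N0 \<alpha> s T (midpoint s tn)"
proof (intro allI impI)
  fix r assume rr: "r \<notin> insert s T"
  note fT = assms(1) and tnT = assms(2) and sT = assms(3) and PP = assms(5) and Pp = assms(6)
    and N0 = assms(7) and cov = assms(9) and mT = assms(10)
  have al: "1 \<le> \<alpha>" using assms(8) by simp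
  define m where "m = midpoint s tn"
  define d where "d = dist s tn"
  define c where "c = Ps / (N0 * (dist s tn / 2) powr \<alpha>)"
  have stn: "s \<noteq> tn" using sT tnT by auto
  have dpos: "0 < d" using stn by (simp add: d_def)
  have dsm: "dist s m = d/2" and dmt: "dist m tn = d/2"
    unfolding m_def d_def by (simp_all add: dist_midpoint)
  have sm: "s \<noteq> m" using dsm dpos by auto
  have mm: "m \<notin> insert s T" using sm mT by (auto simp: m_def)
  define J0 where "J0 = insert m (T \<inter> cball s (d/2))"
  define J1 where "J1 = T \<inter> cball m (d/2)"
  define P0 where "P0 = (\<lambda>i J. if i = s \<and> J = J0 then Ps else if i = m \<and> J = J1 then Pr else 0)"
  have J0A: "J0 \<in> src_arcs s m T" unfolding J0_def src_arcs_def by auto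
  have tnJ1: "tn \<in> J1" unfolding J1_def using tnT dmt by (simp add: dist_commute)
  have J1B: "J1 \<in> relay_arcs T" unfolding J1_def relay_arcs_def using tnJ1 by (auto simp: J1_def)
  have fJ0: "finite J0" and fJ1: "finite J1" using fT by (auto simp: J0_def J1_def)
  have P0nn: "\<And>i J. 0 \<le> P0 i J" using Pp PP by (auto simp: P0_def)
  have V0: "valid_alloc Ps Pr s m T P0"
  proof -
    have "(\<Sum>J\<in>src_arcs s m T. P0 s J) = (\<Sum>J\<in>src_arcs s m T. if J = J0 then Ps else 0)"
      using sm by (intro sum.cong) (auto simp: P0_def)
    also have "\<dots> = Ps" using J0A finite_src_arcs[OF fT] by simp
    finally have e1: "(\<Sum>J\<in>src_arcs s m T. P0 s J) = Ps" .
    have "(\<Sum>J\<in>relay_arcs T. P0 m J) = (\<Sum>J\<in>relay_arcs T. if J = J1 then Pr else 0)"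
      using sm by (intro sum.cong) (auto simp: P0_def)
    also have "\<dots> = Pr" using J1B finite_relay_arcs[OF fT] by simp
    finally have e2: "(\<Sum>J\<in>relay_arcs T. P0 m J) = Pr" .
    show ?thesis unfolding valid_alloc_def using e1 e2 P0nn by auto
  qed
  have Mpos: "0 < (d/2) powr \<alpha>" using dpos by simp
  have capnn: "\<And>i J. J \<in> src_arcs s m T \<union> relay_arcs T \<Longrightarrow> 0 \<le> capacity N0 \<alpha> P0 i J"
  proof -
    fix i J assume "J \<in> src_arcs s m T \<union> relay_arcs T"
    then have "finite J" "J \<noteq> {}" using fT
      by (auto simp: src_arcs_def relay_arcs_def intro: finite_subset)
    then show "0 \<le> capacity N0 \<alpha> P0 i J" using P0nn N0 by (intro capacity_nonneg) auto
  qed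
  have cap0: "c \<le> capacity N0 \<alpha> P0 s J0"
  proof -
    have "P0 s J0 / (N0 * (d/2) powr \<alpha>) \<le> capacity N0 \<alpha> P0 s J0"
    proof (rule capacity_ge[where j=m])
      show "0 < dist s m powr \<alpha>" using sm by simp
      fix k assume "k \<in> J0"
      then have "dist s k \<le> d/2" using dsm by (auto simp: J0_def)
      then show "dist s k powr \<alpha> \<le> (d/2) powr \<alpha>" using al by (intro powr_mono2) auto
    qed (use P0nn N0 fJ0 in \<open>auto simp: J0_def\<close>)
    then show ?thesis by (simp add: P0_def c_def d_def)
  qed
  have cap1: "c \<le> capacity N0 \<alpha> P0 m J1" if tJ1: "t \<in> J1" for t
  proof -
    have "P0 m J1 / (N0 * (d/2) powr \<alpha>) \<le> capacity N0 \<alpha> P0 m J1"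
    proof (rule capacity_ge[where j=t])
      have "m \<noteq> t" using tJ1 mm by (auto simp: J1_def)
      then show "0 < dist m t powr \<alpha>" by simp
      fix k assume "k \<in> J1"
      then have "dist m k \<le> d/2" by (auto simp: J1_def)
      then show "dist m k powr \<alpha> \<le> (d/2) powr \<alpha>" using al by (intro powr_mono2) auto
    qed (use P0nn N0 fJ1 tJ1 in auto)
    then show ?thesis using sm PP by (simp add: P0_def c_def d_def)
  qed
  have lowm: "c \<le> multicast_rate N0 \<alpha> s m T P0"
  proof -
    have "c \<le> rate_st N0 \<alpha> s m T P0 t" if tT: "t \<in> T" for t
    proof -
      define SS where "SS = {S. S \<subseteq> insert s (insert m T) \<and> s \<in> S \<and> t \<notin> S}"
      have fSS: "finite SS" unfolding SS_def
        by (rule finite_subset[of _ "Pow (insert s (insert m T))"]) (use fT in auto)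
      have neSS: "SS \<noteq> {}" using tT sT unfolding SS_def by (intro ex_in_conv[THEN iffD1] exI[of _ "{s}"]) auto
      have "c \<le> cut_value N0 \<alpha> s m T P0 S" if SS: "S \<in> SS" for S
      proof -
        let ?A = "{J\<in>src_arcs s m T. s \<in> S \<and> \<not> J \<subseteq> S}"
        let ?B = "{J\<in>relay_arcs T. m \<in> S \<and> \<not> J \<subseteq> S}"
        have fA: "finite ?A" using finite_src_arcs[OF fT] by auto
        have fB: "finite ?B" using finite_relay_arcs[OF fT] by auto
        have A0: "0 \<le> (\<Sum>J\<in>?A. capacity N0 \<alpha> P0 s J)" by (intro sum_nonneg capnn) auto
        have B0: "0 \<le> (\<Sum>J\<in>?B. capacity N0 \<alpha> P0 m J)" by (intro sum_nonneg capnn) auto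
        have ce: "cut_value N0 \<alpha> s m T P0 S = (\<Sum>J\<in>?A. capacity N0 \<alpha> P0 s J) + (\<Sum>J\<in>?B. capacity N0 \<alpha> P0 m J)"
          by (rule cut_value_eq[OF sm fT])
        show ?thesis
        proof (cases "t \<in> J0 \<or> m \<notin> S")
          case True
          have "J0 \<in> ?A" using True J0A SS by (auto simp: SS_def J0_def)
          then have "capacity N0 \<alpha> P0 s J0 \<le> (\<Sum>J\<in>?A. capacity N0 \<alpha> P0 s J)"
            using fA by (intro member_le_sum capnn) auto
          then show ?thesis using ce cap0 B0 by linarith
        next
          case False
          then have tJ1: "t \<in> J1" using tT cov by (auto simp: J0_def J1_def m_def d_def)
          have "J1 \<in> ?B" using False tJ1 J1B SS by (auto simp: SS_def)
          then have "capacity N0 \<alpha> P0 m J1 \<le> (\<Sum>J\<in>?B. capacity N0 \<alpha> P0 m J)"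
            using fB by (intro member_le_sum capnn) auto
          then show ?thesis using ce cap1[OF tJ1] A0 by linarith
        qed
      qed
      then show ?thesis unfolding rate_st_def SS_def[symmetric] using fSS neSS by simp
    qed
    then show ?thesis unfolding multicast_rate_def using fT tnT by (subst Min_ge_iff) auto
  qed
  have upm: "\<And>P. valid_alloc Ps Pr s m T P \<Longrightarrow> multicast_rate N0 \<alpha> s m T P \<le> c"
    unfolding c_def using upper[OF fT tnT sT mm N0 al _ PP] by blast
  have upr: "\<And>P. valid_alloc Ps Pr s r T P \<Longrightarrow> multicast_rate N0 \<alpha> s r T P \<le> c"
    unfolding c_def using upper[OF fT tnT sT rr N0 al _ PP] by blast
  have "opt_rate Ps Pr N0 \<alpha> s T r \<le> c"
    unfolding opt_rate_def
  proof (rule cSUP_least)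
    have "valid_alloc Ps Pr s r T (\<lambda>_ _. 0)" using Pp PP by (simp add: valid_alloc_def)
    then show "{P. valid_alloc Ps Pr s r T P} \<noteq> {}" by blast
  qed (use upr in auto)
  also have "c \<le> multicast_rate N0 \<alpha> s m T P0" by (rule lowm)
  also have "\<dots> \<le> opt_rate Ps Pr N0 \<alpha> s T m"
    unfolding opt_rate_def
    by (rule cSUP_upper) (use V0 upm in \<open>auto simp: bdd_above_def\<close>)
  finally show "opt_rate Ps Pr N0 \<alpha> s T r \<le> opt_rate Ps Pr N0 \<alpha> s T (midpoint s tn)"
    by (simp add: m_def)
qed

end
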